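(* Let $R$ be a GCD-domain. Let $s_1,\dots,s_n\in(\operatorname{Sqf} R)\setminus R^{\ast}$ and $t_1,\dots,t_m\in(\operatorname{Sqf} R)\setminus R^{\ast}$ (with $n,m\geqslant 1$), let $k_1<k_2<\dots<k_n$ and $l_1<l_2<\dots<l_m$ be non-negative integers, and let $c,d\in R^{\ast}$. If $$c\,s_n^{2^{k_n}}s_{n-1}^{2^{k_{n-1}}}\cdots s_2^{2^{k_2}}s_1^{2^{k_1}}=d\,t_m^{2^{l_m}}t_{m-1}^{2^{l_{m-1}}}\cdots t_2^{2^{l_2}}t_1^{2^{l_1}},$$ then $n=m$, and $s_i\sim t_i$ and $k_i=l_i$ for $i=1,\dots,n$.
   Context: A GCD-domain is a commutative ring with identity without zero divisors in which the intersection of any two principal ideals is principal. $R^{\ast}$ denotes the set of invertible elements of $R$; $a\sim b$ means $a$ and $b$ are associated. An element $a\in R$ is square-free if it cannot be written as $a=b^2c$ with $b\in R\setminus R^{\ast}$ and $c\in R$; $\operatorname{Sqf} R$ denotes the set of square-free elements of $R$. *)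

theory Defs
  imports Main
begin

text \<open>A GCD-domain: an integral domain in which the intersection of any two
principal ideals is principal, i.e. for all a b there is c with aR \<inter> bR = cR.\<close>
definition gcd_domain :: "'a::idom itself \<Rightarrow> bool" where
  "gcd_domain _ \<longleftrightarrow>
     (\<forall>a b :: 'a. \<exists>c. \<forall>x. (a dvd x \<and> b dvd x) \<longleftrightarrow> c dvd x)"

definition sqf :: "'a::idom \<Rightarrow> bool" where
  "sqf a \<longleftrightarrow> \<not> (\<exists>b c. \<not> b dvd 1 \<and> a = b ^ 2 * c)"

definition associated :: "'a::idom \<Rightarrow> 'a \<Rightarrow> bool" where
  "associated a b \<longleftrightarrow> a dvd b \<and> b dvd a"

end

theory Submission
  imports Defs
begin

lemma assoc_refl: "associated a a" by (simp add: associated_def)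
lemma assoc_sym: "associated a b \<Longrightarrow> associated b a" by (simp add: associated_def)
lemma assoc_trans: "associated a b \<Longrightarrow> associated b c \<Longrightarrow> associated a c"
  unfolding associated_def using dvd_trans by blast
lemma assoc_mult: "associated a b \<Longrightarrow> associated c d \<Longrightarrow> associated (a*c) (b*d)"
  unfolding associated_def using mult_dvd_mono by blast
lemma assoc_power: "associated a b \<Longrightarrow> associated (a^n) (b^n)"
  unfolding associated_def using dvd_power_same by blast
lemma assoc_cancel: "(x::'a::idom) \<noteq> 0 \<Longrightarrow> associated (a*x) (b*x) \<Longrightarrow> associated a b"
  unfolding associated_def by simp

lemma sqf_nz: "sqf (s::'a::idom) \<Longrightarrow> s \<noteq> 0"
  unfolding sqf_def proof
  assume "\<not> (\<exists>b c. \<not> b dvd 1 \<and> s = b ^ 2 * c)" "s = 0"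
  moreover have "\<not> (0::'a) dvd 1" by simp
  moreover have "s = 0^2 * 0" using \<open>s = 0\<close> by simp
  ultimately show False by blast
qed

lemma sqf_one: "sqf (1::'a::idom)"
  unfolding sqf_def
proof
  assume "\<exists>b c. \<not> b dvd 1 \<and> (1::'a) = b ^ 2 * c"
  then obtain b c where b: "\<not> b dvd 1" and e: "(1::'a) = b^2 * c" by blast
  have "1 = b * (b*c)" using e by (simp add: power2_eq_square mult.assoc)
  hence "b dvd 1" by (rule dvdI)
  thus False using b by simp
qed

lemma unit_cancel: "(b::'a::idom) dvd 1 \<Longrightarrow> a dvd b*c \<Longrightarrow> a dvd c"
proof -
  assume "b dvd 1" "a dvd b*c"
  then obtain e where e: "1 = b*e" by (auto simp: dvd_def)
  have "a dvd (b*c)*e" using \<open>a dvd b*c\<close> by simp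
  moreover have "(b*c)*e = c*(b*e)" by (simp add: ac_simps)
  hence "(b*c)*e = c" using e by simp
  ultimately show ?thesis by simp
qed

lemma lcm_facts:
  fixes a b :: "'a::idom"
  assumes G: "gcd_domain TYPE('a)" and a: "a \<noteq> 0" and b: "b \<noteq> 0"
  shows "\<exists>L g u v. (\<forall>x. (a dvd x \<and> b dvd x) \<longleftrightarrow> L dvd x) \<and> a*b = L*g \<and> a = v*g \<and> b = u*g \<and> L = a*u \<and> L \<noteq> 0"
proof -
  obtain L where L: "\<forall>x. (a dvd x \<and> b dvd x) \<longleftrightarrow> L dvd x" using G unfolding gcd_domain_def by blast
  have "L dvd a*b" using spec[OF L, of "a*b"] by simp
  then obtain g where g: "a*b = L*g" by (rule dvdE)
  have L0: "L \<noteq> 0"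
  proof
    assume "L = 0" hence "a*b = 0" using g by simp
    thus False using a b by simp
  qed
  have "a dvd L" using spec[OF L, of L] by simp
  then obtain u where u: "L = a*u" by (rule dvdE)
  have "b dvd L" using spec[OF L, of L] by simp
  then obtain v where v: "L = b*v" by (rule dvdE)
  have "b = u*g"
  proof -
    have "a*b = a*(u*g)" using g u by (simp add: mult.assoc)
    thus ?thesis using a by simp
  qed
  moreover have "a = v*g"
  proof -
    have "b*a = b*(v*g)" using g v by (simp add: ac_simps)
    thus ?thesis using b by simp
  qed
  ultimately show ?thesis using L g u L0 by blast
qed

lemma gcd_ex:
  fixes a b :: "'a::idom"
  assumes G: "gcd_domain TYPE('a)" and a: "a \<noteq> 0" and b: "b \<noteq> 0"
  shows "\<exists>g a' b'. a = g*a' \<and> b = g*b' \<and> (\<forall>h. h dvd a' \<and> h dvd b' \<longrightarrow> h dvd 1)"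
proof -
  obtain L g u v where L: "\<forall>x. (a dvd x \<and> b dvd x) \<longleftrightarrow> L dvd x" and g: "a*b = L*g"
    and v: "a = v*g" and u: "b = u*g" and Lu: "L = a*u" and L0: "L \<noteq> 0"
    using lcm_facts[OF G a b] by blast
  have "\<forall>h. h dvd v \<and> h dvd u \<longrightarrow> h dvd 1"
  proof (intro allI impI)
    fix h assume h: "h dvd v \<and> h dvd u"
    then obtain v' u' where v': "v = h*v'" and u': "u = h*u'" by (auto simp: dvd_def)
    have "a dvd g*h*v'*u'" using v v' by (simp add: algebra_simps)
    moreover have "b dvd g*h*v'*u'" using u u' by (simp add: algebra_simps)
    ultimately have "L dvd g*h*v'*u'" using spec[OF L, of "g*h*v'*u'"] by blast
    then obtain w where w: "g*h*v'*u' = L*w" by (auto simp: dvd_def)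
    have "L = h * (g*h*v'*u')" using Lu v v' u' by (simp add: algebra_simps)
    hence "L * 1 = L * (h*w)" using w by (simp add: algebra_simps)
    hence "h*w = 1" using L0 by simp
    hence "1 = h*w" by simp
    thus "h dvd 1" by (rule dvdI)
  qed
  moreover have "a = g*v" "b = g*u" using u v by (simp_all only: mult.commute)
  ultimately show ?thesis by blast
qed

lemma euclid:
  fixes a b c :: "'a::idom"
  assumes G: "gcd_domain TYPE('a)" and cop: "\<forall>h. h dvd a \<and> h dvd b \<longrightarrow> h dvd 1"
    and d: "a dvd b*c"
  shows "a dvd c"
proof (cases "a = 0 \<or> b = 0")
  case True
  then show ?thesis
  proof
    assume "a = 0" hence "b dvd 1" using spec[OF cop, of b] by simp
    thus ?thesis using d by (rule unit_cancel)
  next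
    assume "b = 0" hence "a dvd 1" using spec[OF cop, of a] by simp
    thus ?thesis using one_dvd by (rule dvd_trans)
  qed
next
  case False
  hence a: "a \<noteq> 0" and b: "b \<noteq> 0" by auto
  obtain L g u v where L: "\<forall>x. (a dvd x \<and> b dvd x) \<longleftrightarrow> L dvd x" and g: "a*b = L*g"
    and v: "a = v*g" and u: "b = u*g" and Lu: "L = a*u" and L0: "L \<noteq> 0"
    using lcm_facts[OF G a b] by blast
  have "g dvd a" "g dvd b" using u v by simp_all
  hence gu: "g dvd 1" using spec[OF cop, of g] by blast
  have "b dvd b*c" by simp
  hence "L dvd b*c" using spec[OF L, of "b*c"] d by blast
  then obtain w where w: "b*c = L*w" by (rule dvdE)
  have "b*(a*w) = (a*b)*w" by (simp add: ac_simps)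
  also have "\<dots> = (L*g)*w" using g by simp
  also have "\<dots> = (L*w)*g" by (simp add: ac_simps)
  also have "\<dots> = (b*c)*g" using w by simp
  also have "\<dots> = b*(c*g)" by (simp add: ac_simps)
  finally have "a*w = c*g" using b by simp
  hence "a dvd g*c" using dvdI[of "c*g" a w] by (simp add: mult.commute)
  thus ?thesis using gu unit_cancel by blast
qed

lemma aux_unit:
  fixes B D t :: "'a::idom"
  assumes G: "gcd_domain TYPE('a)" and cop: "\<forall>h. h dvd B \<and> h dvd D \<longrightarrow> h dvd 1"
    and t: "sqf t" and B0: "B \<noteq> 0" and d: "B^2 dvd t*D^2"
  shows "B dvd 1"
proof -
  have b2: "B dvd B^2" by (simp add: power2_eq_square)
  have e: "t*D^2 = D*(D*t)" by (simp add: power2_eq_square ac_simps)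
  have "B^2 dvd D*(D*t)" using d by (simp only: e)
  hence "B dvd D*(D*t)" by (rule dvd_trans[OF b2])
  hence "B dvd D*t" by (rule euclid[OF G cop])
  hence "B dvd t" by (rule euclid[OF G cop])
  then obtain t1 where t1: "t = B*t1" by (rule dvdE)
  have "B*B dvd B*(t1*D^2)" using d t1 by (simp add: power2_eq_square mult.assoc)
  hence "B dvd t1*D^2" using B0 by simp
  hence "B dvd D*(D*t1)" by (simp add: power2_eq_square ac_simps)
  hence "B dvd D*t1" by (rule euclid[OF G cop])
  hence "B dvd t1" by (rule euclid[OF G cop])
  then obtain t2 where t2: "t1 = B*t2" by (rule dvdE)
  have "t = B^2*t2" using t1 t2 by (simp add: power2_eq_square mult.assoc)
  thus ?thesis using t unfolding sqf_def by blast
qed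

lemma unit_assoc: "(a::'a::idom) dvd 1 \<Longrightarrow> b dvd 1 \<Longrightarrow> associated a b"
proof -
  assume a: "a dvd 1" and b: "b dvd 1"
  have "a dvd b" using a one_dvd by (rule dvd_trans)
  moreover have "b dvd a" using b one_dvd by (rule dvd_trans)
  ultimately show ?thesis unfolding associated_def by blast
qed

lemma KL:
  fixes s t B D :: "'a::idom"
  assumes G: "gcd_domain TYPE('a)" and s: "sqf s" and t: "sqf t" and B0: "B \<noteq> 0" and D0: "D \<noteq> 0"
    and A: "associated (s*B^2) (t*D^2)"
  shows "associated B D \<and> associated s t"
proof -
  obtain g B' D' where gB: "B = g*B'" and gD: "D = g*D'" and cop: "\<forall>h. h dvd B' \<and> h dvd D' \<longrightarrow> h dvd 1"
    using gcd_ex[OF G B0 D0] by blast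
  have g0: "g \<noteq> 0" and B'0: "B' \<noteq> 0" and D'0: "D' \<noteq> 0" using gB gD B0 D0 by auto
  have "associated ((s*B'^2) * g^2) ((t*D'^2) * g^2)" using A gB gD by (simp add: power_mult_distrib algebra_simps)
  hence A': "associated (s*B'^2) (t*D'^2)" using assoc_cancel[of "g^2"] g0 by simp
  have "B'^2 dvd t*D'^2" using A' unfolding associated_def by (meson dvd_mult_right dvd_trans)
  hence uB: "B' dvd 1" using aux_unit[OF G cop t B'0] by blast
  have cop': "\<forall>h. h dvd D' \<and> h dvd B' \<longrightarrow> h dvd 1" using cop by blast
  have "D'^2 dvd s*B'^2" using A' unfolding associated_def by (meson dvd_mult_right dvd_trans)
  hence uD: "D' dvd 1" using aux_unit[OF G cop' s D'0] by blast
  have BD: "associated B D" using gB gD assoc_mult[OF assoc_refl unit_assoc[OF uB uD]] by simp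
  have "associated (t*D^2) (t*B^2)" using assoc_mult[OF assoc_refl assoc_power[OF assoc_sym[OF BD]]] .
  hence "associated (s*B^2) (t*B^2)" using A assoc_trans by blast
  hence "associated s t" using assoc_cancel[of "B^2"] B0 by simp
  thus ?thesis using BD by simp
qed

lemma root2k:
  fixes x y :: "'a::idom"
  assumes G: "gcd_domain TYPE('a)" and x: "x \<noteq> 0" and y: "y \<noteq> 0"
    and A: "associated (x^(2^k)) (y^(2^k))"
  shows "associated x y"
  using x y A
proof (induction k arbitrary: x y)
  case 0 then show ?case by simp
next
  case (Suc k)
  have "associated ((x^2)^(2^k)) ((y^2)^(2^k))" using Suc.prems(3)
    by (simp add: power_mult[symmetric] mult.commute)
  hence "associated (x^2) (y^2)" using Suc.IH Suc.prems by simp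
  hence "associated (1*x^2) (1*y^2)" by simp
  thus ?case using KL[OF G sqf_one sqf_one Suc.prems(1,2)] by blast
qed


lemma decomp:
  fixes s :: "nat \<Rightarrow> 'a::idom" and k :: "nat \<Rightarrow> nat"
  assumes K: "\<forall>i\<in>{2..Suc n}. k 1 < k i"
  shows "(\<Prod>i=1..Suc n. s i ^ 2^k i) = (s 1 * (\<Prod>i=1..n. s (Suc i) ^ 2^(k (Suc i) - k 1 - 1))^2)^(2^k 1)"
proof -
  have "(\<Prod>i=1..Suc n. s i ^ 2^k i) = s 1 ^ 2^k 1 * (\<Prod>i=Suc 1..Suc n. s i ^ 2^k i)"
    by (simp add: prod.atLeast_Suc_atMost)
  also have "(\<Prod>i=Suc 1..Suc n. s i ^ 2^k i) = (\<Prod>i=1..n. s (Suc i) ^ 2^k (Suc i))"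
    by (rule prod.shift_bounds_cl_Suc_ivl)
  also have "\<dots> = (\<Prod>i=1..n. (s (Suc i) ^ 2^(k (Suc i) - k 1 - 1))^2^Suc (k 1))"
  proof (rule prod.cong)
    fix i assume i: "i \<in> {1..n}"
    hence "k 1 < k (Suc i)" using K by auto
    hence e: "k (Suc i) = (k (Suc i) - k 1 - 1) + Suc (k 1)" by simp
    have "(s (Suc i) ^ 2^(k (Suc i) - k 1 - 1))^2^Suc (k 1) = s (Suc i) ^ (2^(k (Suc i) - k 1 - 1) * 2^Suc (k 1))"
      by (simp add: power_mult)
    also have "2^(k (Suc i) - k 1 - 1) * 2^Suc (k 1) = (2::nat)^((k (Suc i) - k 1 - 1) + Suc (k 1))"
      by (simp only: power_add)
    also have "(k (Suc i) - k 1 - 1) + Suc (k 1) = k (Suc i)" using \<open>k 1 < k (Suc i)\<close> by simp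
    finally show "s (Suc i) ^ 2^k (Suc i) = (s (Suc i) ^ 2^(k (Suc i) - k 1 - 1))^2^Suc (k 1)" by simp
  qed simp
  also have "\<dots> = (\<Prod>i=1..n. s (Suc i) ^ 2^(k (Suc i) - k 1 - 1))^2^Suc (k 1)"
    by (simp add: prod_power_distrib)
  finally show ?thesis
    by (simp add: power_mult_distrib power_mult[symmetric])
qed

lemma prod_nz:
  fixes s :: "nat \<Rightarrow> 'a::idom"
  assumes "\<forall>i\<in>{1..n}. s (Suc i) \<noteq> 0"
  shows "(\<Prod>i=1..n. s (Suc i) ^ e i) \<noteq> 0"
  using assms by (simp add: prod_zero_iff)

lemma prod_nonunit:
  fixes s :: "nat \<Rightarrow> 'a::idom"
  assumes "\<forall>i\<in>{1..n}. \<not> s (Suc i) dvd 1" and "n \<ge> 1"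
  shows "\<not> (\<Prod>i=1..n. s (Suc i) ^ 2^e i) dvd 1"
proof
  assume u: "(\<Prod>i=1..n. s (Suc i) ^ 2^e i) dvd 1"
  have "s (Suc 1) dvd s (Suc 1) ^ 2^e 1" by (simp add: dvd_power)
  also have "\<dots> dvd (\<Prod>i=1..n. s (Suc i) ^ 2^e i)" using assms(2) by (intro dvd_prodI) auto
  finally have "s (Suc 1) dvd 1" using u dvd_trans by blast
  thus False using assms by auto
qed

lemma step:
  fixes s t :: "nat \<Rightarrow> 'a::idom" and k l :: "nat \<Rightarrow> nat"
  assumes G: "gcd_domain TYPE('a)"
    and S: "\<forall>i\<in>{1..Suc n}. sqf (s i) \<and> \<not> s i dvd 1"
    and T: "\<forall>j\<in>{1..Suc m}. sqf (t j) \<and> \<not> t j dvd 1"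
    and K: "\<forall>i\<in>{1..Suc n}. \<forall>i'\<in>{1..Suc n}. i < i' \<longrightarrow> k i < k i'"
    and L: "\<forall>j\<in>{1..Suc m}. \<forall>j'\<in>{1..Suc m}. j < j' \<longrightarrow> l j < l j'"
    and kl: "k 1 \<le> l 1"
    and A: "associated (\<Prod>i=1..Suc n. s i ^ 2^k i) (\<Prod>j=1..Suc m. t j ^ 2^l j)"
  shows "k 1 = l 1 \<and> associated (s 1) (t 1) \<and>
    associated (\<Prod>i=1..n. s (Suc i) ^ 2^(k (Suc i) - k 1 - 1)) (\<Prod>i=1..m. t (Suc i) ^ 2^(l (Suc i) - l 1 - 1))"
proof -
  define Q1 where "Q1 = (\<Prod>i=1..n. s (Suc i) ^ 2^(k (Suc i) - k 1 - 1))"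
  define Q2 where "Q2 = (\<Prod>i=1..m. t (Suc i) ^ 2^(l (Suc i) - l 1 - 1))"
  have Q10: "Q1 \<noteq> 0" unfolding Q1_def
  proof (intro prod_nz ballI)
    fix i assume "i \<in> {1..n}" hence "Suc i \<in> {1..Suc n}" by simp
    thus "s (Suc i) \<noteq> 0" using S sqf_nz by blast
  qed
  have Q20: "Q2 \<noteq> 0" unfolding Q2_def
  proof (intro prod_nz ballI)
    fix i assume "i \<in> {1..m}" hence "Suc i \<in> {1..Suc m}" by simp
    thus "t (Suc i) \<noteq> 0" using T sqf_nz by blast
  qed
  have s1: "sqf (s 1)" "\<not> s 1 dvd 1" using S by auto
  have t1: "sqf (t 1)" "\<not> t 1 dvd 1" using T by auto
  have s10: "s 1 \<noteq> 0" using s1 sqf_nz by blast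
  have t10: "t 1 \<noteq> 0" using t1 sqf_nz by blast
  have "\<forall>i\<in>{2..Suc n}. k 1 < k i" using K by auto
  hence ds: "(\<Prod>i=1..Suc n. s i ^ 2^k i) = (s 1 * Q1^2)^(2^k 1)" unfolding Q1_def by (rule decomp)
  have "\<forall>i\<in>{2..Suc m}. l 1 < l i" using L by auto
  hence dt: "(\<Prod>i=1..Suc m. t i ^ 2^l i) = (t 1 * Q2^2)^(2^l 1)" unfolding Q2_def by (rule decomp)
  have A': "associated ((s 1 * Q1^2)^(2^k 1)) ((t 1 * Q2^2)^(2^l 1))" using A ds dt by simp
  have X0: "s 1 * Q1^2 \<noteq> 0" using s10 Q10 by simp
  have Y0: "t 1 * Q2^2 \<noteq> 0" using t10 Q20 by simp
  show ?thesis
  proof (cases "k 1 = l 1")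
    case True
    hence "associated (s 1 * Q1^2) (t 1 * Q2^2)" using root2k[OF G X0 Y0] A' by simp
    thus ?thesis using KL[OF G s1(1) t1(1) Q10 Q20] True unfolding Q1_def Q2_def by blast
  next
    case False
    hence lt: "k 1 < l 1" using kl by simp
    define Y where "Y = (t 1 * Q2^2)^(2^(l 1 - k 1 - 1))"
    have Y0': "Y \<noteq> 0" unfolding Y_def using Y0 by simp
    have "(2::nat)^l 1 = 2^(l 1 - k 1 - 1) * 2 * 2^k 1"
    proof -
      have "l 1 = (l 1 - k 1 - 1) + 1 + k 1" using lt by simp
      hence "(2::nat)^l 1 = 2^((l 1 - k 1 - 1) + 1 + k 1)" by (rule arg_cong)
      thus ?thesis by (simp add: power_add)
    qed
    moreover have "(1 * Y^2)^(2^k 1) = (t 1 * Q2^2)^(2^(l 1 - k 1 - 1) * 2 * 2^k 1)"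
      unfolding Y_def by (simp only: mult_1 power_mult)
    ultimately have "(t 1 * Q2^2)^(2^l 1) = (1 * Y^2)^(2^k 1)" by simp
    hence "associated ((s 1 * Q1^2)^(2^k 1)) ((1 * Y^2)^(2^k 1))" using A' by simp
    hence "associated (s 1 * Q1^2) (1 * Y^2)" using root2k[OF G X0] Y0' by simp
    hence "associated (s 1) 1" using KL[OF G s1(1) sqf_one Q10 Y0'] by blast
    hence "s 1 dvd 1" unfolding associated_def by blast
    thus ?thesis using s1 by blast
  qed
qed


lemma unit_mult_assoc: "(c::'a::idom) dvd 1 \<Longrightarrow> associated (c*x) x"
proof -
  assume "c dvd 1"
  then obtain e where e: "1 = c*e" by (rule dvdE)
  have "x = (c*x)*e" using e by (simp add: ac_simps)
  hence "c*x dvd x" by (rule dvdI)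
  moreover have "x dvd c*x" by simp
  ultimately show ?thesis unfolding associated_def by blast
qed

lemma main:
  fixes s t :: "nat \<Rightarrow> 'a::idom" and k l :: "nat \<Rightarrow> nat" and n m :: nat
  assumes G: "gcd_domain TYPE('a)"
  shows "n \<ge> 1 \<Longrightarrow> m \<ge> 1 \<Longrightarrow> (\<forall>i\<in>{1..n}. sqf (s i) \<and> \<not> s i dvd 1) \<Longrightarrow>
    (\<forall>j\<in>{1..m}. sqf (t j) \<and> \<not> t j dvd 1) \<Longrightarrow>
    (\<forall>i\<in>{1..n}. \<forall>i'\<in>{1..n}. i < i' \<longrightarrow> k i < k i') \<Longrightarrow>
    (\<forall>j\<in>{1..m}. \<forall>j'\<in>{1..m}. j < j' \<longrightarrow> l j < l j') \<Longrightarrow>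
    associated (\<Prod>i=1..n. s i ^ (2 ^ k i)) (\<Prod>j=1..m. t j ^ (2 ^ l j)) \<Longrightarrow>
    n = m \<and> (\<forall>i\<in>{1..n}. associated (s i) (t i) \<and> k i = l i)"
proof (induction n arbitrary: m s t k l)
  case 0 thus ?case by simp
next
  case (Suc n)
  obtain m' where m: "m = Suc m'" using Suc.prems(2) by (cases m) auto
  have S: "\<forall>i\<in>{1..Suc n}. sqf (s i) \<and> \<not> s i dvd 1" using Suc.prems(3) .
  have T: "\<forall>j\<in>{1..Suc m'}. sqf (t j) \<and> \<not> t j dvd 1" using Suc.prems(4) m by simp
  have K: "\<forall>i\<in>{1..Suc n}. \<forall>i'\<in>{1..Suc n}. i < i' \<longrightarrow> k i < k i'" using Suc.prems(5) .
  have L: "\<forall>j\<in>{1..Suc m'}. \<forall>j'\<in>{1..Suc m'}. j < j' \<longrightarrow> l j < l j'" using Suc.prems(6) m by simp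
  have A: "associated (\<Prod>i=1..Suc n. s i ^ (2 ^ k i)) (\<Prod>j=1..Suc m'. t j ^ (2 ^ l j))"
    using Suc.prems(7) m by simp
  define Q1 where "Q1 = (\<Prod>i=1..n. s (Suc i) ^ 2^(k (Suc i) - k 1 - 1))"
  define Q2 where "Q2 = (\<Prod>i=1..m'. t (Suc i) ^ 2^(l (Suc i) - l 1 - 1))"
  have R: "k 1 = l 1 \<and> associated (s 1) (t 1) \<and> associated Q1 Q2"
  proof (cases "k 1 \<le> l 1")
    case True
    show ?thesis unfolding Q1_def Q2_def by (rule step[OF G S T K L True A])
  next
    case False
    hence le: "l 1 \<le> k 1" by simp
    have X: "l 1 = k 1 \<and> associated (t 1) (s 1) \<and> associated Q2 Q1"
      unfolding Q1_def Q2_def by (rule step[OF G T S L K le assoc_sym[OF A]])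
    hence "associated (s 1) (t 1)" "associated Q1 Q2" using assoc_sym by blast+
    thus ?thesis using X by simp
  qed
  have Snu: "\<forall>i\<in>{1..n}. \<not> s (Suc i) dvd 1"
  proof
    fix i assume "i \<in> {1..n}" hence "Suc i \<in> {1..Suc n}" by simp
    thus "\<not> s (Suc i) dvd 1" using S by blast
  qed
  have Tnu: "\<forall>i\<in>{1..m'}. \<not> t (Suc i) dvd 1"
  proof
    fix i assume "i \<in> {1..m'}" hence "Suc i \<in> {1..Suc m'}" by simp
    thus "\<not> t (Suc i) dvd 1" using T by blast
  qed
  show ?case
  proof (cases "n = 0")
    case True
    hence "Q1 = 1" unfolding Q1_def by simp
    hence Q2u: "Q2 dvd 1" using R unfolding associated_def by simp
    have "m' = 0"
    proof (rule ccontr)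
      assume "m' \<noteq> 0" hence "m' \<ge> 1" by simp
      from prod_nonunit[where e="\<lambda>i. l (Suc i) - l 1 - 1", OF Tnu this] Q2u show False unfolding Q2_def by blast
    qed
    thus ?thesis using True m R by simp
  next
    case False
    hence n1: "n \<ge> 1" by simp
    have "m' \<noteq> 0"
    proof
      assume "m' = 0"
      hence "Q2 = 1" unfolding Q2_def by simp
      hence Q1u: "Q1 dvd 1" using R unfolding associated_def by simp
      from prod_nonunit[where e="\<lambda>i. k (Suc i) - k 1 - 1", OF Snu n1] Q1u show False unfolding Q1_def by blast
    qed
    hence m1: "m' \<ge> 1" by simp
    have S': "\<forall>i\<in>{1..n}. sqf (s (Suc i)) \<and> \<not> s (Suc i) dvd 1"
    proof
      fix i assume "i \<in> {1..n}" hence "Suc i \<in> {1..Suc n}" by simp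
      thus "sqf (s (Suc i)) \<and> \<not> s (Suc i) dvd 1" using S by blast
    qed
    have T': "\<forall>i\<in>{1..m'}. sqf (t (Suc i)) \<and> \<not> t (Suc i) dvd 1"
    proof
      fix i assume "i \<in> {1..m'}" hence "Suc i \<in> {1..Suc m'}" by simp
      thus "sqf (t (Suc i)) \<and> \<not> t (Suc i) dvd 1" using T by blast
    qed
    have K': "\<forall>i\<in>{1..n}. \<forall>i'\<in>{1..n}. i < i' \<longrightarrow> k (Suc i) - k 1 - 1 < k (Suc i') - k 1 - 1"
    proof (intro ballI impI)
      fix i i' assume i: "i \<in> {1..n}" and i': "i' \<in> {1..n}" and lt: "i < i'"
      have "1 \<in> {1..Suc n}" "Suc i \<in> {1..Suc n}" "Suc i' \<in> {1..Suc n}" using i i' by auto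
      hence "k 1 < k (Suc i)" "k (Suc i) < k (Suc i')"
        using bspec[OF bspec[OF K \<open>1 \<in> {1..Suc n}\<close>] \<open>Suc i \<in> {1..Suc n}\<close>]
          bspec[OF bspec[OF K \<open>Suc i \<in> {1..Suc n}\<close>] \<open>Suc i' \<in> {1..Suc n}\<close>] lt i by simp_all
      thus "k (Suc i) - k 1 - 1 < k (Suc i') - k 1 - 1" by simp
    qed
    have L': "\<forall>i\<in>{1..m'}. \<forall>i'\<in>{1..m'}. i < i' \<longrightarrow> l (Suc i) - l 1 - 1 < l (Suc i') - l 1 - 1"
    proof (intro ballI impI)
      fix i i' assume i: "i \<in> {1..m'}" and i': "i' \<in> {1..m'}" and lt: "i < i'"
      have "1 \<in> {1..Suc m'}" "Suc i \<in> {1..Suc m'}" "Suc i' \<in> {1..Suc m'}" using i i' by auto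
      hence "l 1 < l (Suc i)" "l (Suc i) < l (Suc i')"
        using bspec[OF bspec[OF L \<open>1 \<in> {1..Suc m'}\<close>] \<open>Suc i \<in> {1..Suc m'}\<close>]
          bspec[OF bspec[OF L \<open>Suc i \<in> {1..Suc m'}\<close>] \<open>Suc i' \<in> {1..Suc m'}\<close>] lt i by simp_all
      thus "l (Suc i) - l 1 - 1 < l (Suc i') - l 1 - 1" by simp
    qed
    have AQ: "associated Q1 Q2" using R by simp
    have IH: "n = m' \<and> (\<forall>i\<in>{1..n}. associated (s (Suc i)) (t (Suc i)) \<and>
        k (Suc i) - k 1 - 1 = l (Suc i) - l 1 - 1)"
      using Suc.IH[of m' "\<lambda>i. s (Suc i)" "\<lambda>i. t (Suc i)" "\<lambda>i. k (Suc i) - k 1 - 1" "\<lambda>i. l (Suc i) - l 1 - 1"]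
        n1 m1 S' T' K' L' AQ unfolding Q1_def Q2_def by simp
    have "\<forall>i\<in>{1..Suc n}. associated (s i) (t i) \<and> k i = l i"
    proof
      fix i assume i: "i \<in> {1..Suc n}"
      show "associated (s i) (t i) \<and> k i = l i"
      proof (cases "i = 1")
        case True thus ?thesis using R by simp
      next
        case False
        then obtain j where j: "i = Suc j" "j \<in> {1..n}" using i by (cases i) auto
        have a1: "1 \<in> {1..Suc n}" and a2: "Suc j \<in> {1..Suc n}" using j by auto
        have k1: "k 1 < k (Suc j)" using bspec[OF bspec[OF K a1] a2] j by simp
        have b1: "1 \<in> {1..Suc m'}" and b2: "Suc j \<in> {1..Suc m'}" using j IH by auto
        have l1: "l 1 < l (Suc j)" using bspec[OF bspec[OF L b1] b2] j by simp
        have "associated (s (Suc j)) (t (Suc j))" "k (Suc j) - k 1 - 1 = l (Suc j) - l 1 - 1"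
          using bspec[OF conjunct2[OF IH] j(2)] by simp_all
        thus ?thesis using k1 l1 R j by simp
      qed
    qed
    thus ?thesis using IH m by simp
  qed
qed

theorem proposition2:
  fixes s t :: "nat \<Rightarrow> 'a::idom" and k l :: "nat \<Rightarrow> nat"
    and n m :: nat and c d :: 'a
  assumes "gcd_domain TYPE('a)"
    and "n \<ge> 1" and "m \<ge> 1"
    and "\<forall>i\<in>{1..n}. sqf (s i) \<and> \<not> s i dvd 1"
    and "\<forall>j\<in>{1..m}. sqf (t j) \<and> \<not> t j dvd 1"
    and "\<forall>i\<in>{1..n}. \<forall>i'\<in>{1..n}. i < i' \<longrightarrow> k i < k i'"
    and "\<forall>j\<in>{1..m}. \<forall>j'\<in>{1..m}. j < j' \<longrightarrow> l j < l j'"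
    and "c dvd 1" and "d dvd 1"
    and "c * (\<Prod>i=1..n. s i ^ (2 ^ k i)) = d * (\<Prod>j=1..m. t j ^ (2 ^ l j))"
  shows "n = m \<and> (\<forall>i\<in>{1..n}. associated (s i) (t i) \<and> k i = l i)"
proof -
  have "associated (\<Prod>i=1..n. s i ^ (2 ^ k i)) (c * (\<Prod>i=1..n. s i ^ (2 ^ k i)))"
    by (rule assoc_sym[OF unit_mult_assoc[OF assms(8)]])
  moreover have "associated (d * (\<Prod>j=1..m. t j ^ (2 ^ l j))) (\<Prod>j=1..m. t j ^ (2 ^ l j))"
    by (rule unit_mult_assoc[OF assms(9)])
  ultimately have A: "associated (\<Prod>i=1..n. s i ^ (2 ^ k i)) (\<Prod>j=1..m. t j ^ (2 ^ l j))"
    unfolding assms(10) by (rule assoc_trans)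
  show ?thesis by (rule main[OF assms(1-7) A])
qed

end
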